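(* For every $\mathtt{PDL}$ sequent $\Gamma\Rightarrow\Delta$: if $\Gamma\Rightarrow\Delta$ is provable in $\mathtt{CGPDL}$, then $\Gamma\Rightarrow\Delta$ is valid.
   Context: $\mathtt{PDL}$ formulas/programs over sets $\mathsf{Prop}$, $\mathsf{AtProg}$: $\varphi ::= \bot \mid p \mid (\varphi\to\varphi) \mid [\pi]\varphi$, $\pi ::= \alpha \mid \pi;\pi \mid \pi\cup\pi \mid \pi^{*} \mid \varphi?$. $[\pi]\Gamma=\{[\pi]\varphi:\varphi\in\Gamma\}$. A model $M=(W,(R_\alpha),V)$: $W\neq\emptyset$, $R_\alpha\subseteq W\times W$, $V:W\to\mathcal P(\mathsf{Prop})$; $R_{\pi_0;\pi_1}$ composition, $R_{\pi_0\cup\pi_1}$ union, $R_{\pi^*}$ reflexive–transitive closure of $R_\pi$, $R_{\psi?}=\{(w,w):M,w\models\psi\}$; $\bot$ false, $p$ true at $w$ iff $p\in V(w)$, $\to$ classical, $[\pi]\varphi$ true at $w$ iff $\varphi$ true at all $v$ with $wR_\pi v$. A sequent $\Gamma\Rightarrow\Delta$ is a pair of finite sets of formulas; valid if in every model at every state where all of $\Gamma$ hold some formula of $\Delta$ holds. $\mathtt{CGPDL}$ rules (premises / conclusion): (Ax) / $\Gamma\Rightarrow\Delta$, $\Gamma\cap\Delta\neq\emptyset$; ($\bot$) / $\Gamma,\bot\Rightarrow\Delta$; ($\to$L) $\Gamma\Rightarrow\varphi,\Delta$ and $\Gamma,\psi\Rightarrow\Delta$ / $\Gamma,\varphi\to\psi\Rightarrow\Delta$;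 ($\to$R) $\Gamma,\varphi\Rightarrow\psi,\Delta$ / $\Gamma\Rightarrow\varphi\to\psi,\Delta$; (Wk) $\Gamma\Rightarrow\Delta$ / $\Gamma'\Rightarrow\Delta'$, $\Gamma\subseteq\Gamma'$, $\Delta\subseteq\Delta'$; (Cut) $\Gamma\Rightarrow\varphi,\Delta$ and $\Gamma,\varphi\Rightarrow\Delta$ / $\Gamma\Rightarrow\Delta$; (K) $\Gamma\Rightarrow\varphi$ / $\Gamma',[\pi]\Gamma\Rightarrow[\pi]\varphi,\Delta$; ($[;]$L) $\Gamma,[\pi_0][\pi_1]\varphi\Rightarrow\Delta$ / $\Gamma,[\pi_0;\pi_1]\varphi\Rightarrow\Delta$; ($[;]$R) $\Gamma\Rightarrow[\pi_0][\pi_1]\varphi,\Delta$ / $\Gamma\Rightarrow[\pi_0;\pi_1]\varphi,\Delta$; ($[\cup]$L) $\Gamma,[\pi_0]\varphi,[\pi_1]\varphi\Rightarrow\Delta$ / $\Gamma,[\pi_0\cup\pi_1]\varphi\Rightarrow\Delta$; ($[\cup]$R) $\Gamma\Rightarrow\Delta,[\pi_0]\varphi$ and $\Gamma\Rightarrow\Delta,[\pi_1]\varphi$ / $\Gamma\Rightarrow[\pi_0\cup\pi_1]\varphi,\Delta$; ($[*]$L) $\Gamma,\varphi,[\pi][\pi^*]\varphi\Rightarrow\Delta$ / $\Gamma,[\pi^*]\varphi\Rightarrow\Delta$; ($[?]$L) $\Gamma\Rightarrow\varphi,\Delta$ and $\Gamma,\psi\Rightarrow\Delta$ / $\Gamma,[\varphi?]\psi\Rightarrow\Delta$;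 ($[?]$R) $\Gamma,\varphi\Rightarrow\psi,\Delta$ / $\Gamma\Rightarrow[\varphi?]\psi,\Delta$; (C-s) $\Gamma\Rightarrow\varphi,\Delta$ and $\Gamma\Rightarrow[\pi][\pi^*]\varphi,\Delta$ / $\Gamma\Rightarrow[\pi^*]\varphi,\Delta$. A pre-proof is a finite tree of sequents built of rule instances whose leaves are Ax/$\bot$ instances or buds, with each bud assigned a companion (an inner node labelled with the same sequent); the derivation graph identifies each bud with its companion; a path is a sequence of nodes each a premise of the previous one's rule instance. A trace along a path $(\Gamma_i\Rightarrow\Delta_i)$ is a sequence $\tau_i\in\Delta_i$ such that: at ($\to$R), ($[;]$R), ($[\cup]$R), ($[?]$R), (C-s), either $\tau_{i+1}=\tau_i$ or $\tau_i$ is the principal formula and $\tau_{i+1}$ is its component in the chosen premise ($\psi$ for $\varphi\to\psi$; $[\pi_0][\pi_1]\varphi$ for $[\pi_0;\pi_1]\varphi$; $[\pi_j]\varphi$ for $[\pi_0\cup\pi_1]\varphi$ in the premise containing $[\pi_j]\varphi$; $\psi$ for $[\varphi?]\psi$; $\varphi$ or $[\pi][\pi^*]\varphi$ for $[\pi^*]\varphi$, the latter being a progress point); at (K), $\tau_i$ is the principal formula $[\pi]\varphi$ and $\tau_{i+1}=\varphi$; at all other rules, $\tau_{i+1}=\tau_i$. A $\mathtt{CGPDL}$ proof is a pre-proof in which every infinite path of the derivation graph has a tail followed by a trace with infinitely many progress points; provable means having such a proof with the sequent at the root. *)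

theory Defs
  imports "HOL-Library.Infinite_Set"
begin

datatype ('a, 'p) fm =
    FBot
  | Atom 'p
  | Imp "('a, 'p) fm" "('a, 'p) fm"
  | Box "('a, 'p) prg" "('a, 'p) fm"
and ('a, 'p) prg =
    At 'a
  | Seq "('a, 'p) prg" "('a, 'p) prg"
  | Cup "('a, 'p) prg" "('a, 'p) prg"
  | Star "('a, 'p) prg"
  | Test "('a, 'p) fm"

record ('w, 'a, 'p) model =
  Wd :: "'w set"
  Rl :: "'a \<Rightarrow> ('w \<times> 'w) set"
  Vl :: "'w \<Rightarrow> 'p set"

definition is_model :: "('w, 'a, 'p) model \<Rightarrow> bool" where
  "is_model M \<longleftrightarrow> Wd M \<noteq> {} \<and> (\<forall>\<alpha>. Rl M \<alpha> \<subseteq> Wd M \<times> Wd M)"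

fun sat :: "('w, 'a, 'p) model \<Rightarrow> 'w \<Rightarrow> ('a, 'p) fm \<Rightarrow> bool"
and rel :: "('w, 'a, 'p) model \<Rightarrow> ('a, 'p) prg \<Rightarrow> ('w \<times> 'w) set" where
  "sat M w FBot = False"
| "sat M w (Atom p) = (p \<in> Vl M w)"
| "sat M w (Imp \<phi> \<psi>) = (sat M w \<phi> \<longrightarrow> sat M w \<psi>)"
| "sat M w (Box \<pi> \<phi>) = (\<forall>v. (w, v) \<in> rel M \<pi> \<longrightarrow> sat M v \<phi>)"
| "rel M (At \<alpha>) = Rl M \<alpha>"
| "rel M (Seq \<pi>0 \<pi>1) = rel M \<pi>0 O rel M \<pi>1"
| "rel M (Cup \<pi>0 \<pi>1) = rel M \<pi>0 \<union> rel M \<pi>1"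
| "rel M (Star \<pi>) = Id_on (Wd M) \<union> (rel M \<pi>)\<^sup>+"
| "rel M (Test \<psi>) = {(w, w) | w. w \<in> Wd M \<and> sat M w \<psi>}"

type_synonym ('a, 'p) sequent = "('a, 'p) fm set \<times> ('a, 'p) fm set"

definition valid_in :: "('w, 'a, 'p) model \<Rightarrow> ('a, 'p) fm set \<Rightarrow> ('a, 'p) fm set \<Rightarrow> bool" where
  "valid_in M \<Gamma> \<Delta> \<longleftrightarrow>
     (\<forall>w \<in> Wd M. (\<forall>\<phi> \<in> \<Gamma>. sat M w \<phi>) \<longrightarrow> (\<exists>\<psi> \<in> \<Delta>. sat M w \<psi>))"

datatype ('a, 'p) rule =
    RAx | RBot
  | RImpL "('a, 'p) fm" "('a, 'p) fm"
  | RImpR "('a, 'p) fm" "('a, 'p) fm"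
  | RWk
  | RCut "('a, 'p) fm"
  | RK "('a, 'p) prg" "('a, 'p) fm"
  | RSeqL "('a, 'p) prg" "('a, 'p) prg" "('a, 'p) fm"
  | RSeqR "('a, 'p) prg" "('a, 'p) prg" "('a, 'p) fm"
  | RCupL "('a, 'p) prg" "('a, 'p) prg" "('a, 'p) fm"
  | RCupR "('a, 'p) prg" "('a, 'p) prg" "('a, 'p) fm"
  | RStarL "('a, 'p) prg" "('a, 'p) fm"
  | RTestL "('a, 'p) fm" "('a, 'p) fm"
  | RTestR "('a, 'p) fm" "('a, 'p) fm"
  | RCs "('a, 'p) prg" "('a, 'p) fm"

text \<open>inst r C Ps: C is the conclusion and Ps the (ordered) premises of an instance of r.\<close>
fun inst :: "('a, 'p) rule \<Rightarrow> ('a, 'p) sequent \<Rightarrow> ('a, 'p) sequent list \<Rightarrow> bool" where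
  "inst RAx (\<Gamma>, \<Delta>) Ps \<longleftrightarrow> Ps = [] \<and> \<Gamma> \<inter> \<Delta> \<noteq> {}"
| "inst RBot (\<Gamma>, \<Delta>) Ps \<longleftrightarrow> Ps = [] \<and> FBot \<in> \<Gamma>"
| "inst (RImpL \<phi> \<psi>) C Ps \<longleftrightarrow> (\<exists>\<Gamma> \<Delta>. C = (insert (Imp \<phi> \<psi>) \<Gamma>, \<Delta>) \<and>
       Ps = [(\<Gamma>, insert \<phi> \<Delta>), (insert \<psi> \<Gamma>, \<Delta>)])"
| "inst (RImpR \<phi> \<psi>) C Ps \<longleftrightarrow> (\<exists>\<Gamma> \<Delta>. C = (\<Gamma>, insert (Imp \<phi> \<psi>) \<Delta>) \<and>
       Ps = [(insert \<phi> \<Gamma>, insert \<psi> \<Delta>)])"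
| "inst RWk (\<Gamma>', \<Delta>') Ps \<longleftrightarrow> (\<exists>\<Gamma> \<Delta>. \<Gamma> \<subseteq> \<Gamma>' \<and> \<Delta> \<subseteq> \<Delta>' \<and> Ps = [(\<Gamma>, \<Delta>)])"
| "inst (RCut \<phi>) (\<Gamma>, \<Delta>) Ps \<longleftrightarrow> Ps = [(\<Gamma>, insert \<phi> \<Delta>), (insert \<phi> \<Gamma>, \<Delta>)]"
| "inst (RK \<pi> \<phi>) C Ps \<longleftrightarrow> (\<exists>\<Gamma> \<Gamma>' \<Delta>. C = (\<Gamma>' \<union> Box \<pi> ` \<Gamma>, insert (Box \<pi> \<phi>) \<Delta>) \<and>
       Ps = [(\<Gamma>, {\<phi>})])"
| "inst (RSeqL \<pi>0 \<pi>1 \<phi>) C Ps \<longleftrightarrow> (\<exists>\<Gamma> \<Delta>. C = (insert (Box (Seq \<pi>0 \<pi>1) \<phi>) \<Gamma>, \<Delta>) \<and>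
       Ps = [(insert (Box \<pi>0 (Box \<pi>1 \<phi>)) \<Gamma>, \<Delta>)])"
| "inst (RSeqR \<pi>0 \<pi>1 \<phi>) C Ps \<longleftrightarrow> (\<exists>\<Gamma> \<Delta>. C = (\<Gamma>, insert (Box (Seq \<pi>0 \<pi>1) \<phi>) \<Delta>) \<and>
       Ps = [(\<Gamma>, insert (Box \<pi>0 (Box \<pi>1 \<phi>)) \<Delta>)])"
| "inst (RCupL \<pi>0 \<pi>1 \<phi>) C Ps \<longleftrightarrow> (\<exists>\<Gamma> \<Delta>. C = (insert (Box (Cup \<pi>0 \<pi>1) \<phi>) \<Gamma>, \<Delta>) \<and>
       Ps = [(insert (Box \<pi>0 \<phi>) (insert (Box \<pi>1 \<phi>) \<Gamma>), \<Delta>)])"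
| "inst (RCupR \<pi>0 \<pi>1 \<phi>) C Ps \<longleftrightarrow> (\<exists>\<Gamma> \<Delta>. C = (\<Gamma>, insert (Box (Cup \<pi>0 \<pi>1) \<phi>) \<Delta>) \<and>
       Ps = [(\<Gamma>, insert (Box \<pi>0 \<phi>) \<Delta>), (\<Gamma>, insert (Box \<pi>1 \<phi>) \<Delta>)])"
| "inst (RStarL \<pi> \<phi>) C Ps \<longleftrightarrow> (\<exists>\<Gamma> \<Delta>. C = (insert (Box (Star \<pi>) \<phi>) \<Gamma>, \<Delta>) \<and>
       Ps = [(insert \<phi> (insert (Box \<pi> (Box (Star \<pi>) \<phi>)) \<Gamma>), \<Delta>)])"
| "inst (RTestL \<phi> \<psi>) C Ps \<longleftrightarrow> (\<exists>\<Gamma> \<Delta>. C = (insert (Box (Test \<phi>) \<psi>) \<Gamma>, \<Delta>) \<and>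
       Ps = [(\<Gamma>, insert \<phi> \<Delta>), (insert \<psi> \<Gamma>, \<Delta>)])"
| "inst (RTestR \<phi> \<psi>) C Ps \<longleftrightarrow> (\<exists>\<Gamma> \<Delta>. C = (\<Gamma>, insert (Box (Test \<phi>) \<psi>) \<Delta>) \<and>
       Ps = [(insert \<phi> \<Gamma>, insert \<psi> \<Delta>)])"
| "inst (RCs \<pi> \<phi>) C Ps \<longleftrightarrow> (\<exists>\<Gamma> \<Delta>. C = (\<Gamma>, insert (Box (Star \<pi>) \<phi>) \<Delta>) \<and>
       Ps = [(\<Gamma>, insert \<phi> \<Delta>), (\<Gamma>, insert (Box \<pi> (Box (Star \<pi>) \<phi>)) \<Delta>)])"

text \<open>Trace steps: tr r j \<tau> \<tau>' says that \<tau>' (in premise number j) may follow \<tau> (in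
  the conclusion) along a trace through an instance of r.\<close>
fun tr :: "('a, 'p) rule \<Rightarrow> nat \<Rightarrow> ('a, 'p) fm \<Rightarrow> ('a, 'p) fm \<Rightarrow> bool" where
  "tr (RImpR \<phi> \<psi>) j \<tau> \<tau>' \<longleftrightarrow> \<tau>' = \<tau> \<or> (\<tau> = Imp \<phi> \<psi> \<and> \<tau>' = \<psi>)"
| "tr (RSeqR \<pi>0 \<pi>1 \<phi>) j \<tau> \<tau>' \<longleftrightarrow> \<tau>' = \<tau> \<or>
     (\<tau> = Box (Seq \<pi>0 \<pi>1) \<phi> \<and> \<tau>' = Box \<pi>0 (Box \<pi>1 \<phi>))"
| "tr (RCupR \<pi>0 \<pi>1 \<phi>) j \<tau> \<tau>' \<longleftrightarrow> \<tau>' = \<tau> \<or>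
     (\<tau> = Box (Cup \<pi>0 \<pi>1) \<phi> \<and> \<tau>' = Box (if j = 0 then \<pi>0 else \<pi>1) \<phi>)"
| "tr (RTestR \<phi> \<psi>) j \<tau> \<tau>' \<longleftrightarrow> \<tau>' = \<tau> \<or> (\<tau> = Box (Test \<phi>) \<psi> \<and> \<tau>' = \<psi>)"
| "tr (RCs \<pi> \<phi>) j \<tau> \<tau>' \<longleftrightarrow> \<tau>' = \<tau> \<or>
     (\<tau> = Box (Star \<pi>) \<phi> \<and> \<tau>' = (if j = 0 then \<phi> else Box \<pi> (Box (Star \<pi>) \<phi>)))"
| "tr (RK \<pi> \<phi>) j \<tau> \<tau>' \<longleftrightarrow> \<tau> = Box \<pi> \<phi> \<and> \<tau>' = \<phi>"
| "tr _ j \<tau> \<tau>' \<longleftrightarrow> \<tau>' = \<tau>"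

fun progress :: "('a, 'p) rule \<Rightarrow> nat \<Rightarrow> ('a, 'p) fm \<Rightarrow> ('a, 'p) fm \<Rightarrow> bool" where
  "progress (RCs \<pi> \<phi>) j \<tau> \<tau>' \<longleftrightarrow>
     j = 1 \<and> \<tau> = Box (Star \<pi>) \<phi> \<and> \<tau>' = Box \<pi> (Box (Star \<pi>) \<phi>)"
| "progress _ j \<tau> \<tau>' \<longleftrightarrow> False"

text \<open>A pre-proof: finite tree with node set N, root r, labels lab, ordered children kids
  (the premises of the rule instance rl n at n), and a companion assignment bud for the buds.\<close>
definition pre_proof ::
  "nat set \<Rightarrow> nat \<Rightarrow> (nat \<Rightarrow> ('a, 'p) sequent) \<Rightarrow> (nat \<Rightarrow> nat list) \<Rightarrow>
   (nat \<Rightarrow> nat option) \<Rightarrow> (nat \<Rightarrow> ('a, 'p) rule) \<Rightarrow> bool" where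
  "pre_proof N r lab kids bud rl \<longleftrightarrow>
     finite N \<and> r \<in> N \<and>
     (\<forall>n \<in> N. finite (fst (lab n)) \<and> finite (snd (lab n))) \<and>
     (\<forall>n \<in> N. set (kids n) \<subseteq> N \<and> distinct (kids n)) \<and>
     (\<forall>n \<in> N. r \<notin> set (kids n)) \<and>
     (\<forall>m \<in> N - {r}. \<exists>!n. n \<in> N \<and> m \<in> set (kids n)) \<and>
     (\<forall>m \<in> N. (r, m) \<in> {(n, k). n \<in> N \<and> k \<in> set (kids n)}\<^sup>*) \<and>
     (\<forall>n \<in> N. case bud n of
        Some c \<Rightarrow> kids n = [] \<and> c \<in> N \<and> kids c \<noteq> [] \<and> lab c = lab n
      | None \<Rightarrow> inst (rl n) (lab n) (map lab (kids n)))"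

text \<open>In the derivation graph every bud is identified with its companion.\<close>
definition target :: "(nat \<Rightarrow> nat option) \<Rightarrow> nat \<Rightarrow> nat" where
  "target bud m = (case bud m of Some c \<Rightarrow> c | None \<Rightarrow> m)"

text \<open>An infinite path p through the derivation graph, j i being the index of the premise
  taken at step i.\<close>
definition inf_path ::
  "nat set \<Rightarrow> (nat \<Rightarrow> nat list) \<Rightarrow> (nat \<Rightarrow> nat option) \<Rightarrow> (nat \<Rightarrow> nat) \<Rightarrow> (nat \<Rightarrow> nat) \<Rightarrow> bool" where
  "inf_path N kids bud p j \<longleftrightarrow>
     (\<forall>i. p i \<in> N \<and> bud (p i) = None \<and> j i < length (kids (p i)) \<and>
          p (Suc i) = target bud (kids (p i) ! j i))"

definition cgpdl_proof ::
  "nat set \<Rightarrow> nat \<Rightarrow> (nat \<Rightarrow> ('a, 'p) sequent) \<Rightarrow> (nat \<Rightarrow> nat list) \<Rightarrow>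
   (nat \<Rightarrow> nat option) \<Rightarrow> (nat \<Rightarrow> ('a, 'p) rule) \<Rightarrow> bool" where
  "cgpdl_proof N r lab kids bud rl \<longleftrightarrow>
     pre_proof N r lab kids bud rl \<and>
     (\<forall>p j. inf_path N kids bud p j \<longrightarrow>
        (\<exists>k \<tau>. (\<forall>i \<ge> k. \<tau> i \<in> snd (lab (p i)) \<and> tr (rl (p i)) (j i) (\<tau> i) (\<tau> (Suc i))) \<and>
               (\<exists>\<^sub>\<infinity>i. k \<le> i \<and> progress (rl (p i)) (j i) (\<tau> i) (\<tau> (Suc i)))))"

definition provable :: "('a, 'p) fm set \<Rightarrow> ('a, 'p) fm set \<Rightarrow> bool" where
  "provable \<Gamma> \<Delta> \<longleftrightarrow>
     (\<exists>N r lab kids bud rl. cgpdl_proof N r lab kids bud rl \<and> lab r = (\<Gamma>, \<Delta>))"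

end

theory Submission
  imports Defs
begin


lemma rel_sub: "is_model M \<Longrightarrow> rel M \<pi> \<subseteq> Wd M \<times> Wd M"
proof (induction \<pi>)
  case (Star \<pi>)
  then have "(rel M \<pi>)\<^sup>+ \<subseteq> Wd M \<times> Wd M" by (intro trancl_subset_Sigma) auto
  then show ?case by (auto simp: Id_on_def)
qed (auto simp: is_model_def)

inductive run :: "('w,'a,'p) model \<Rightarrow> ('a,'p) prg \<Rightarrow> 'w \<Rightarrow> 'w \<Rightarrow> nat \<Rightarrow> bool" for M where
  rAt: "(w,v) \<in> Rl M a \<Longrightarrow> run M (At a) w v 0"
| rSeq: "run M p w v i \<Longrightarrow> run M q v u j \<Longrightarrow> run M (Seq p q) w u (i+j)"
| rCup1: "run M p w v i \<Longrightarrow> run M (Cup p q) w v i"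
| rCup2: "run M q w v i \<Longrightarrow> run M (Cup p q) w v i"
| rTest: "w \<in> Wd M \<Longrightarrow> sat M w \<phi> \<Longrightarrow> run M (Test \<phi>) w w 0"
| rStar0: "w \<in> Wd M \<Longrightarrow> run M (Star p) w w 0"
| rStarS: "run M p w v i \<Longrightarrow> run M (Star p) v u j \<Longrightarrow> run M (Star p) w u (Suc (i+j))"

inductive_cases runAtE: "run M (At a) w v k"
inductive_cases runSeqE: "run M (Seq p q) w v k"
inductive_cases runCupE: "run M (Cup p q) w v k"
inductive_cases runTestE: "run M (Test \<phi>) w v k"
inductive_cases runStarE: "run M (Star p) w v k"

lemma run_star_rel:
  assumes "run M \<pi> w u n" "\<pi> = Star p" "\<And>w v i. run M p w v i \<Longrightarrow> (w,v) \<in> rel M p"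
  shows "(w,u) \<in> Id_on (Wd M) \<union> (rel M p)\<^sup>+"
  using assms
proof (induction rule: run.induct)
  case (rStarS p' w v i u j)
  then have "(w,v) \<in> rel M p" by auto
  moreover have "(v,u) \<in> Id_on (Wd M) \<union> (rel M p)\<^sup>+" using rStarS by auto
  ultimately have "(w,u) \<in> (rel M p)\<^sup>+" by (auto simp: Id_on_def)
  then show ?case by simp
qed auto

lemma rel_run: "is_model M \<Longrightarrow> (w,v) \<in> rel M \<pi> \<longleftrightarrow> (\<exists>k. run M \<pi> w v k)"
proof (induction \<pi> arbitrary: w v rule: fm_prg.induct[where ?P1.0="\<lambda>_. True", THEN conjunct2])
  case (5 x w v)
  then show ?case by (auto intro: rAt elim: runAtE)
next
  case (6 \<pi>1 \<pi>2 w v)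
  show ?case
  proof
    assume "(w,v) \<in> rel M (Seq \<pi>1 \<pi>2)"
    then obtain y where "(w,y) \<in> rel M \<pi>1" "(y,v) \<in> rel M \<pi>2" by auto
    then show "\<exists>k. run M (Seq \<pi>1 \<pi>2) w v k" using "6" by (meson rSeq)
  next
    assume "\<exists>k. run M (Seq \<pi>1 \<pi>2) w v k"
    then obtain y i j where "run M \<pi>1 w y i" "run M \<pi>2 y v j" by (auto elim: runSeqE)
    moreover have "(w,y) \<in> rel M \<pi>1" using "6.IH"(1)[OF "6.prems"] calculation by blast
    moreover have "(y,v) \<in> rel M \<pi>2" using "6.IH"(2)[OF "6.prems"] calculation by blast
    ultimately show "(w,v) \<in> rel M (Seq \<pi>1 \<pi>2)" by auto
  qed
next
  case (7 \<pi>1 \<pi>2 w v)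
  then show ?case by (auto intro: rCup1 rCup2 elim!: runCupE)
next
  case (8 \<pi> w v)
  show ?case
  proof
    assume "(w,v) \<in> rel M (Star \<pi>)"
    then consider "w = v" "w \<in> Wd M" | "(w,v) \<in> (rel M \<pi>)\<^sup>+" by (auto simp: Id_on_def)
    then show "\<exists>k. run M (Star \<pi>) w v k"
    proof cases
      case 1 then show ?thesis by (auto intro: rStar0)
    next
      case 2
      then show ?thesis
      proof (induction rule: converse_trancl_induct)
        case (base y)
        then obtain i where "run M \<pi> y v i" using "8" by auto
        moreover have "v \<in> Wd M" using base rel_sub[OF "8.prems"] by auto
        ultimately show ?case by (meson rStar0 rStarS)
      next
        case (step y z)
        then obtain i where "run M \<pi> y z i" using "8" by auto
        then show ?case using step by (meson rStarS)
      qed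
    qed
  next
    assume "\<exists>k. run M (Star \<pi>) w v k"
    then obtain k where "run M (Star \<pi>) w v k" by blast
    from run_star_rel[OF this refl] show "(w,v) \<in> rel M (Star \<pi>)"
      using "8.IH"[OF "8.prems"] by auto
  qed
qed (auto intro: rTest elim!: runTestE)

inductive refu :: "('w,'a,'p) model \<Rightarrow> 'w \<Rightarrow> ('a,'p) fm \<Rightarrow> nat \<Rightarrow> bool" for M where
  fBot: "refu M w FBot 0"
| fAtom: "p \<notin> Vl M w \<Longrightarrow> refu M w (Atom p) 0"
| fImp: "sat M w \<phi> \<Longrightarrow> refu M w \<psi> n \<Longrightarrow> refu M w (Imp \<phi> \<psi>) n"
| fBox: "run M \<pi> w v k \<Longrightarrow> refu M v \<phi> n \<Longrightarrow> refu M w (Box \<pi> \<phi>) (k+n)"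

inductive_cases refImpE: "refu M w (Imp \<phi> \<psi>) n"
inductive_cases refBoxE: "refu M w (Box \<pi> \<phi>) n"
inductive_cases refAtomE: "refu M w (Atom p) n"

lemma refute_iff_aux:
  assumes "is_model M"
  shows "(\<forall>w. (\<not> sat M w \<tau>) \<longleftrightarrow> (\<exists>n. refu M w \<tau> n)) \<and> (\<lambda>_::('a,'b) prg. True) \<pi>"
proof (rule fm_prg.induct[of "\<lambda>\<tau>. \<forall>w. (\<not> sat M w \<tau>) \<longleftrightarrow> (\<exists>n. refu M w \<tau> n)" "\<lambda>_. True"])
  show "\<forall>w. (\<not> sat M w FBot) = (\<exists>n. refu M w FBot n)" by (auto intro: fBot)
next
  fix x show "\<forall>w. (\<not> sat M w (Atom x)) = (\<exists>n. refu M w (Atom x) n)"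
    by (auto intro: fAtom elim: refAtomE)
next
  fix \<tau>1 \<tau>2
  assume "\<forall>w. (\<not> sat M w \<tau>1) = (\<exists>n. refu M w \<tau>1 n)" "\<forall>w. (\<not> sat M w \<tau>2) = (\<exists>n. refu M w \<tau>2 n)"
  then show "\<forall>w. (\<not> sat M w (Imp \<tau>1 \<tau>2)) = (\<exists>n. refu M w (Imp \<tau>1 \<tau>2) n)"
    by (auto intro: fImp elim!: refImpE)
next
  fix x1 \<tau>
  assume IH: "\<forall>w. (\<not> sat M w \<tau>) = (\<exists>n. refu M w \<tau> n)"
  show "\<forall>w. (\<not> sat M w (Box x1 \<tau>)) = (\<exists>n. refu M w (Box x1 \<tau>) n)"
  proof (intro allI iffI)
    fix w
    assume "\<not> sat M w (Box x1 \<tau>)"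
    then obtain v where "(w,v) \<in> rel M x1" "\<not> sat M v \<tau>" by auto
    obtain k where k: "run M x1 w v k" using rel_run[OF assms] \<open>(w,v) \<in> rel M x1\<close> by blast
    obtain n where n: "refu M v \<tau> n" using IH \<open>\<not> sat M v \<tau>\<close> by blast
    show "\<exists>n. refu M w (Box x1 \<tau>) n" using fBox[OF k n] by blast
  next
    fix w
    assume "\<exists>n. refu M w (Box x1 \<tau>) n"
    then obtain n where "refu M w (Box x1 \<tau>) n" by blast
    then obtain v k m where r: "run M x1 w v k" "refu M v \<tau> m" by (auto elim: refBoxE)
    then have "(w,v) \<in> rel M x1" using rel_run[OF assms] by blast
    moreover have "\<not> sat M v \<tau>" using IH r by blast
    ultimately show "\<not> sat M w (Box x1 \<tau>)" by auto
  qed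
qed auto

lemma refute_iff: "is_model M \<Longrightarrow> (\<not> sat M w \<tau>) \<longleftrightarrow> (\<exists>n. refu M w \<tau> n)"
  using refute_iff_aux by blast


definition cst :: "('w,'a,'p) model \<Rightarrow> 'w \<Rightarrow> ('a,'p) fm \<Rightarrow> nat" where
  "cst M w \<tau> = (LEAST n. refu M w \<tau> n)"

lemma cst_le: "refu M w \<tau> n \<Longrightarrow> cst M w \<tau> \<le> n"
  unfolding cst_def by (rule Least_le[of "refu M w \<tau>"])

lemma cst_ref: "is_model M \<Longrightarrow> \<not> sat M w \<tau> \<Longrightarrow> refu M w \<tau> (cst M w \<tau>)"
proof -
  assume "is_model M" "\<not> sat M w \<tau>"
  then have "\<exists>n. refu M w \<tau> n" using refute_iff[of M w \<tau>] by simp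
  then obtain n where "refu M w \<tau> n" by blast
  then show ?thesis unfolding cst_def by (rule LeastI[of "refu M w \<tau>"])
qed

lemma ref_false: "is_model M \<Longrightarrow> refu M w \<tau> n \<Longrightarrow> \<not> sat M w \<tau>"
  using refute_iff[of M w \<tau>] by blast

lemma ref_imp: "refu M w (Imp \<phi> \<psi>) n \<Longrightarrow> refu M w \<psi> n"
  by (auto elim: refImpE)

lemma ref_seq: "refu M w (Box (Seq p q) \<phi>) n \<Longrightarrow> refu M w (Box p (Box q \<phi>)) n"
proof -
  assume "refu M w (Box (Seq p q) \<phi>) n"
  then obtain u k m where a: "run M (Seq p q) w u k" "refu M u \<phi> m" "n = k + m"
    by (auto elim: refBoxE)
  from a(1) obtain v i j where b: "run M p w v i" "run M q v u j" "k = i + j"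
    by (auto elim: runSeqE)
  have "refu M v (Box q \<phi>) (j + m)" using b(2) a(2) by (rule fBox)
  from fBox[OF b(1) this] show ?thesis using a b by (simp add: add.assoc)
qed

lemma ref_cup: "refu M w (Box (Cup p q) \<phi>) n \<Longrightarrow> refu M w (Box p \<phi>) n \<or> refu M w (Box q \<phi>) n"
proof -
  assume "refu M w (Box (Cup p q) \<phi>) n"
  then obtain u k m where a: "run M (Cup p q) w u k" "refu M u \<phi> m" "n = k + m"
    by (auto elim: refBoxE)
  from a(1) have "run M p w u k \<or> run M q w u k" by (auto elim: runCupE)
  then show ?thesis
  proof
    assume "run M p w u k"
    from fBox[OF this a(2)] show ?thesis using a(3) by simp
  next
    assume "run M q w u k"
    from fBox[OF this a(2)] show ?thesis using a(3) by simp
  qed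
qed

lemma ref_test: "refu M w (Box (Test \<phi>) \<psi>) n \<Longrightarrow> refu M w \<psi> n"
proof -
  assume "refu M w (Box (Test \<phi>) \<psi>) n"
  then obtain u k m where a: "run M (Test \<phi>) w u k" "refu M u \<psi> m" "n = k + m"
    by (auto elim: refBoxE)
  from a(1) have "u = w" "k = 0" by (auto elim: runTestE)
  then show ?thesis using a by simp
qed

lemma ref_star: "refu M w (Box (Star p) \<phi>) n \<Longrightarrow>
   refu M w \<phi> n \<or> (\<exists>m<n. refu M w (Box p (Box (Star p) \<phi>)) m)"
proof -
  assume "refu M w (Box (Star p) \<phi>) n"
  then obtain u k m where a: "run M (Star p) w u k" "refu M u \<phi> m" "n = k + m"
    by (auto elim: refBoxE)
  from a(1) consider (z) "u = w" "k = 0"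
    | (s) v i j where "run M p w v i" "run M (Star p) v u j" "k = Suc (i + j)"
    by (auto elim: runStarE)
  then show ?thesis
  proof cases
    case z then show ?thesis using a by simp
  next
    case (s v i j)
    have "refu M v (Box (Star p) \<phi>) (j + m)" using s(2) a(2) by (rule fBox)
    from fBox[OF s(1) this] have "refu M w (Box p (Box (Star p) \<phi>)) (i + (j + m))" .
    moreover have "i + (j + m) < n" using a s by simp
    ultimately show ?thesis by blast
  qed
qed



definition costok :: "('w,'a,'p) model \<Rightarrow> 'w \<Rightarrow> 'w \<Rightarrow> ('a,'p) fm set \<Rightarrow> ('a,'p) fm set \<Rightarrow> ('a,'p) rule \<Rightarrow> nat \<Rightarrow> bool" where
  "costok M w w' \<Delta> \<Delta>' r j \<longleftrightarrow> (\<forall>\<tau>\<in>\<Delta>. \<forall>\<tau>'\<in>\<Delta>'. \<not> sat M w \<tau> \<longrightarrow> tr r j \<tau> \<tau>' \<longrightarrow>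
      cst M w' \<tau>' \<le> cst M w \<tau> \<and> (progress r j \<tau> \<tau>' \<longrightarrow> cst M w' \<tau>' < cst M w \<tau>))"

definition goodw :: "('w,'a,'p) model \<Rightarrow> 'w \<Rightarrow> ('a,'p) sequent \<Rightarrow> bool" where
  "goodw M w S \<longleftrightarrow> w \<in> Wd M \<and> (\<forall>\<phi>\<in>fst S. sat M w \<phi>) \<and> (\<forall>\<psi>\<in>snd S. \<not> sat M w \<psi>)"

lemma local_sound:
  assumes M: "is_model M" and w: "w \<in> Wd M" and I: "inst r (\<Gamma>,\<Delta>) Ps"
    and G: "\<forall>\<phi>\<in>\<Gamma>. sat M w \<phi>" and D: "\<forall>\<psi>\<in>\<Delta>. \<not> sat M w \<psi>"
  shows "\<exists>j w'. j < length Ps \<and> goodw M w' (Ps!j) \<and> costok M w w' \<Delta> (snd (Ps!j)) r j"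
proof (cases r)
  case RAx
  then show ?thesis using I G D by auto
next
  case RBot
  then show ?thesis using I G D by auto
next
  case (RImpL a b)
  from I obtain \<Gamma>0 where E: "\<Gamma> = insert (Imp a b) \<Gamma>0" "Ps = [(\<Gamma>0, insert a \<Delta>), (insert b \<Gamma>0, \<Delta>)]"
    using RImpL by auto
  show ?thesis
  proof (cases "sat M w a")
    case True
    then show ?thesis using G D w E RImpL
      by (intro exI[of _ 1] exI[of _ w]) (auto simp: goodw_def costok_def)
  next
    case False
    then show ?thesis using G D w E RImpL
      by (intro exI[of _ 0] exI[of _ w]) (auto simp: goodw_def costok_def)
  qed
next
  case (RImpR a b)
  from I obtain \<Delta>0 where E: "\<Delta> = insert (Imp a b) \<Delta>0" "Ps = [(insert a \<Gamma>, insert b \<Delta>0)]"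
    using RImpR by auto
  have ns: "\<not> sat M w (Imp a b)" using D E by auto
  then have sa: "sat M w a" by simp
  from ns have "refu M w (Imp a b) (cst M w (Imp a b))" by (rule cst_ref[OF M])
  then have r: "refu M w b (cst M w (Imp a b))" by (rule ref_imp)
  have c: "cst M w b \<le> cst M w (Imp a b)" using cst_le[OF r] .
  have nb: "\<not> sat M w b" using ref_false[OF M r] .
  show ?thesis using G D w E RImpR c sa nb
    by (intro exI[of _ 0] exI[of _ w]) (auto simp: goodw_def costok_def)
next
  case RWk
  from I obtain \<Gamma>0 \<Delta>0 where E: "\<Gamma>0 \<subseteq> \<Gamma>" "\<Delta>0 \<subseteq> \<Delta>" "Ps = [(\<Gamma>0, \<Delta>0)]"
    using RWk by auto
  show ?thesis using G D w E RWk
    by (intro exI[of _ 0] exI[of _ w]) (auto simp: goodw_def costok_def)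
next
  case (RCut a)
  from I have E: "Ps = [(\<Gamma>, insert a \<Delta>), (insert a \<Gamma>, \<Delta>)]" using RCut by auto
  show ?thesis
  proof (cases "sat M w a")
    case True
    then show ?thesis using G D w E RCut
      by (intro exI[of _ 1] exI[of _ w]) (auto simp: goodw_def costok_def)
  next
    case False
    then show ?thesis using G D w E RCut
      by (intro exI[of _ 0] exI[of _ w]) (auto simp: goodw_def costok_def)
  qed
next
  case (RK p a)
  from I obtain \<Gamma>0 \<Gamma>' \<Delta>0 where E: "\<Gamma> = \<Gamma>' \<union> Box p ` \<Gamma>0" "\<Delta> = insert (Box p a) \<Delta>0"
     "Ps = [(\<Gamma>0, {a})]"
    using RK by auto
  have "\<not> sat M w (Box p a)" using D E by auto
  then have "refu M w (Box p a) (cst M w (Box p a))" by (rule cst_ref[OF M])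
  then obtain v k m where r: "run M p w v k" "refu M v a m" "cst M w (Box p a) = k + m"
    by (auto elim: refBoxE)
  have wv: "(w,v) \<in> rel M p" using r(1) rel_run[OF M] by blast
  then have v: "v \<in> Wd M" using rel_sub[OF M] by blast
  have G0: "\<forall>\<phi>\<in>\<Gamma>0. sat M v \<phi>"
  proof
    fix \<phi> assume "\<phi> \<in> \<Gamma>0"
    then have "Box p \<phi> \<in> \<Gamma>" using E by auto
    then have "sat M w (Box p \<phi>)" using G by blast
    then show "sat M v \<phi>" using wv by simp
  qed
  have nv: "\<not> sat M v a" using ref_false[OF M r(2)] .
  have c: "cst M v a \<le> cst M w (Box p a)" using cst_le[OF r(2)] r(3) by simp
  show ?thesis using G0 nv v E RK c
    by (intro exI[of _ 0] exI[of _ v]) (auto simp: goodw_def costok_def)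
next
  case (RSeqL p q a)
  from I obtain \<Gamma>0 where E: "\<Gamma> = insert (Box (Seq p q) a) \<Gamma>0"
     "Ps = [(insert (Box p (Box q a)) \<Gamma>0, \<Delta>)]"
    using RSeqL by auto
  show ?thesis using G D w E RSeqL
    by (intro exI[of _ 0] exI[of _ w]) (auto simp: goodw_def costok_def)
next
  case (RSeqR p q a)
  from I obtain \<Delta>0 where E: "\<Delta> = insert (Box (Seq p q) a) \<Delta>0"
     "Ps = [(\<Gamma>, insert (Box p (Box q a)) \<Delta>0)]"
    using RSeqR by auto
  have "\<not> sat M w (Box (Seq p q) a)" using D E by auto
  then have "refu M w (Box (Seq p q) a) (cst M w (Box (Seq p q) a))" by (rule cst_ref[OF M])
  then have r: "refu M w (Box p (Box q a)) (cst M w (Box (Seq p q) a))" by (rule ref_seq)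
  have c: "cst M w (Box p (Box q a)) \<le> cst M w (Box (Seq p q) a)" using cst_le[OF r] .
  have n: "\<not> sat M w (Box p (Box q a))" using ref_false[OF M r] .
  show ?thesis using G D w E RSeqR c n
    by (intro exI[of _ 0] exI[of _ w]) (auto simp: goodw_def costok_def)
next
  case (RCupL p q a)
  from I obtain \<Gamma>0 where E: "\<Gamma> = insert (Box (Cup p q) a) \<Gamma>0"
     "Ps = [(insert (Box p a) (insert (Box q a) \<Gamma>0), \<Delta>)]"
    using RCupL by auto
  show ?thesis using G D w E RCupL
    by (intro exI[of _ 0] exI[of _ w]) (auto simp: goodw_def costok_def)
next
  case (RCupR p q a)
  from I obtain \<Delta>0 where E: "\<Delta> = insert (Box (Cup p q) a) \<Delta>0"
     "Ps = [(\<Gamma>, insert (Box p a) \<Delta>0), (\<Gamma>, insert (Box q a) \<Delta>0)]"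
    using RCupR by auto
  have "\<not> sat M w (Box (Cup p q) a)" using D E by auto
  then have rc: "refu M w (Box (Cup p q) a) (cst M w (Box (Cup p q) a))" by (rule cst_ref[OF M])
  note ref_cup[OF rc]
  then consider (l) "refu M w (Box p a) (cst M w (Box (Cup p q) a))"
    | (r) "refu M w (Box q a) (cst M w (Box (Cup p q) a))" by blast
  then show ?thesis
  proof cases
    case l
    have c: "cst M w (Box p a) \<le> cst M w (Box (Cup p q) a)" using cst_le[OF l] .
    have n: "\<not> sat M w (Box p a)" using ref_false[OF M l] .
    show ?thesis using G D w E RCupR c n
      by (intro exI[of _ 0] exI[of _ w]) (auto simp: goodw_def costok_def)
  next
    case r
    have c: "cst M w (Box q a) \<le> cst M w (Box (Cup p q) a)" using cst_le[OF r] .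
    have n: "\<not> sat M w (Box q a)" using ref_false[OF M r] .
    show ?thesis using G D w E RCupR c n
      by (intro exI[of _ 1] exI[of _ w]) (auto simp: goodw_def costok_def)
  qed
next
  case (RStarL p a)
  from I obtain \<Gamma>0 where E: "\<Gamma> = insert (Box (Star p) a) \<Gamma>0"
     "Ps = [(insert a (insert (Box p (Box (Star p) a)) \<Gamma>0), \<Delta>)]"
    using RStarL by auto
  have s: "sat M w (Box (Star p) a)" using G E by auto
  have s1: "sat M w a" using s w by auto
  have s2: "sat M w (Box p (Box (Star p) a))"
  proof -
    { fix v u assume "(w,v) \<in> rel M p" "(v,u) \<in> rel M (Star p)"
      then have "(w,u) \<in> (rel M p)\<^sup>+" by (auto simp: Id_on_def trancl_into_trancl2)
      then have "(w,u) \<in> rel M (Star p)" by simp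
      then have "sat M u a" using s by auto }
    then show ?thesis by auto
  qed
  show ?thesis using G D w E RStarL s1 s2
    by (intro exI[of _ 0] exI[of _ w]) (auto simp: goodw_def costok_def)
next
  case (RTestL a b)
  from I obtain \<Gamma>0 where E: "\<Gamma> = insert (Box (Test a) b) \<Gamma>0"
     "Ps = [(\<Gamma>0, insert a \<Delta>), (insert b \<Gamma>0, \<Delta>)]"
    using RTestL by auto
  have s: "sat M w (Box (Test a) b)" using G E by auto
  show ?thesis
  proof (cases "sat M w a")
    case True
    then have "sat M w b" using s w by auto
    then show ?thesis using G D w E RTestL
      by (intro exI[of _ 1] exI[of _ w]) (auto simp: goodw_def costok_def)
  next
    case False
    then show ?thesis using G D w E RTestL
      by (intro exI[of _ 0] exI[of _ w]) (auto simp: goodw_def costok_def)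
  qed
next
  case (RTestR a b)
  from I obtain \<Delta>0 where E: "\<Delta> = insert (Box (Test a) b) \<Delta>0"
     "Ps = [(insert a \<Gamma>, insert b \<Delta>0)]"
    using RTestR by auto
  have ns: "\<not> sat M w (Box (Test a) b)" using D E by auto
  then have sa: "sat M w a" and nb: "\<not> sat M w b" using w by auto
  from ns have "refu M w (Box (Test a) b) (cst M w (Box (Test a) b))" by (rule cst_ref[OF M])
  then have r: "refu M w b (cst M w (Box (Test a) b))" by (rule ref_test)
  have c: "cst M w b \<le> cst M w (Box (Test a) b)" using cst_le[OF r] .
  show ?thesis using G D w E RTestR c sa nb
    by (intro exI[of _ 0] exI[of _ w]) (auto simp: goodw_def costok_def)
next
  case (RCs p a)
  from I obtain \<Delta>0 where E: "\<Delta> = insert (Box (Star p) a) \<Delta>0"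
     "Ps = [(\<Gamma>, insert a \<Delta>0), (\<Gamma>, insert (Box p (Box (Star p) a)) \<Delta>0)]"
    using RCs by auto
  have "\<not> sat M w (Box (Star p) a)" using D E by auto
  then have rc: "refu M w (Box (Star p) a) (cst M w (Box (Star p) a))" by (rule cst_ref[OF M])
  note ref_star[OF rc]
  then consider (z) "refu M w a (cst M w (Box (Star p) a))"
    | (s) m where "m < cst M w (Box (Star p) a)" "refu M w (Box p (Box (Star p) a)) m"
    by blast
  then show ?thesis
  proof cases
    case z
    have c: "cst M w a \<le> cst M w (Box (Star p) a)" using cst_le[OF z] .
    have n: "\<not> sat M w a" using ref_false[OF M z] .
    show ?thesis using G D w E RCs c n
      by (intro exI[of _ 0] exI[of _ w]) (auto simp: goodw_def costok_def)
  next
    case s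
    have c: "cst M w (Box p (Box (Star p) a)) < cst M w (Box (Star p) a)"
      using cst_le[OF s(2)] s(1) by simp
    have n: "\<not> sat M w (Box p (Box (Star p) a))" using ref_false[OF M s(2)] .
    show ?thesis using G D w E RCs c n
      by (intro exI[of _ 1] exI[of _ w]) (auto simp: goodw_def costok_def)
  qed
qed



lemma target_props:
  assumes P: "pre_proof N r lab kids bud rl" and m: "m \<in> N"
  shows "target bud m \<in> N \<and> bud (target bud m) = None \<and> lab (target bud m) = lab m"
proof (cases "bud m")
  case None
  then show ?thesis using m by (simp add: target_def)
next
  case (Some c)
  have A: "\<forall>n\<in>N. case bud n of Some c \<Rightarrow> kids n = [] \<and> c \<in> N \<and> kids c \<noteq> [] \<and> lab c = lab n
      | None \<Rightarrow> inst (rl n) (lab n) (map lab (kids n))" using P unfolding pre_proof_def by blast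
  from A m Some have c: "c \<in> N" "kids c \<noteq> []" "lab c = lab m" by auto
  have "bud c = None"
  proof (rule ccontr)
    assume "bud c \<noteq> None"
    then obtain d where "bud c = Some d" by auto
    with A c(1) have "kids c = []" by fastforce
    with c(2) show False by simp
  qed
  then show ?thesis using c Some by (simp add: target_def)
qed

lemma graph_step:
  assumes P: "pre_proof N r lab kids bud rl" and M: "is_model M" and n: "n \<in> N"
    and b: "bud n = None" and g: "goodw M w (lab n)"
  shows "\<exists>j w'. j < length (kids n) \<and> goodw M w' (lab (target bud (kids n ! j))) \<and>
     target bud (kids n ! j) \<in> N \<and> bud (target bud (kids n ! j)) = None \<and>
     costok M w w' (snd (lab n)) (snd (lab (target bud (kids n ! j)))) (rl n) j"
proof -
  have A: "\<forall>n\<in>N. case bud n of Some c \<Rightarrow> kids n = [] \<and> c \<in> N \<and> kids c \<noteq> [] \<and> lab c = lab n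
      | None \<Rightarrow> inst (rl n) (lab n) (map lab (kids n))" using P unfolding pre_proof_def by blast
  have K: "set (kids n) \<subseteq> N" using P n unfolding pre_proof_def by blast
  have I: "inst (rl n) (lab n) (map lab (kids n))" using A n b by fastforce
  obtain \<Gamma> \<Delta> where L: "lab n = (\<Gamma>, \<Delta>)" by (cases "lab n") auto
  have "\<exists>j w'. j < length (map lab (kids n)) \<and> goodw M w' (map lab (kids n) ! j) \<and>
     costok M w w' \<Delta> (snd (map lab (kids n) ! j)) (rl n) j"
    using local_sound[OF M _ I[unfolded L]] g L unfolding goodw_def by auto
  then obtain j w' where j: "j < length (kids n)" "goodw M w' (lab (kids n ! j))"
     "costok M w w' \<Delta> (snd (lab (kids n ! j))) (rl n) j" by auto
  have "kids n ! j \<in> N" using K j(1) nth_mem by blast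
  from target_props[OF P this] j L show ?thesis by (intro exI[of _ j] exI[of _ w']) auto
qed

lemma descent:
  fixes f :: "nat \<Rightarrow> nat"
  assumes d: "\<And>i. i \<ge> k \<Longrightarrow> f (Suc i) \<le> f i"
    and inf: "\<forall>m. \<exists>i\<ge>m. f (Suc i) < f i"
  shows False
proof -
  have mono: "f (i + e) \<le> f i" if "i \<ge> k" for i e
    using that by (induction e) (auto intro: order_trans[OF d])
  have "\<forall>i\<ge>k. f i \<noteq> v" for v
  proof (induction v rule: less_induct)
    case (less v)
    show ?case
    proof (intro allI impI)
      fix i assume i: "i \<ge> k"
      obtain i' where i': "i' \<ge> i" "f (Suc i') < f i'" using inf by blast
      have "f i' \<le> f i" using mono[OF i, of "i' - i"] i' by simp
      then have "f (Suc i') < f i" using i' by simp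
      show "f i \<noteq> v"
      proof
        assume "f i = v"
        then have "f (Suc i') < v" using \<open>f (Suc i') < f i\<close> by simp
        from less[OF this] have "f (Suc i') \<noteq> f (Suc i')" using i i' le_SucI order_trans by blast
        then show False by simp
      qed
    qed
  qed
  then show False by blast
qed



theorem mainTheorem10:
  fixes \<Gamma> \<Delta> :: "('a, 'p) fm set" and M :: "('w, 'a, 'p) model"
  assumes "finite \<Gamma>" and "finite \<Delta>"
    and "provable \<Gamma> \<Delta>"
    and "is_model M"
  shows "valid_in M \<Gamma> \<Delta>"
proof (rule ccontr)
  note M = \<open>is_model M\<close>
  assume "\<not> valid_in M \<Gamma> \<Delta>"
  then obtain w0 where w0: "w0 \<in> Wd M" "\<forall>\<phi>\<in>\<Gamma>. sat M w0 \<phi>" "\<forall>\<psi>\<in>\<Delta>. \<not> sat M w0 \<psi>"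
    unfolding valid_in_def by blast
  obtain N r lab kids bud rl where C: "cgpdl_proof N r lab kids bud rl" and R: "lab r = (\<Gamma>, \<Delta>)"
    using \<open>provable \<Gamma> \<Delta>\<close> unfolding provable_def by blast
  have P: "pre_proof N r lab kids bud rl" using C unfolding cgpdl_proof_def by blast
  have rN: "r \<in> N" using P unfolding pre_proof_def by blast
  define n0 where "n0 = target bud r"
  have n0: "n0 \<in> N" "bud n0 = None" "lab n0 = (\<Gamma>, \<Delta>)"
    using target_props[OF P rN] R unfolding n0_def by auto
  have g0: "goodw M w0 (lab n0)" using w0 n0 unfolding goodw_def by auto
  define Q where "Q = (\<lambda>n w (jw :: nat \<times> 'w). fst jw < length (kids n) \<and>
     goodw M (snd jw) (lab (target bud (kids n ! fst jw))) \<and>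
     target bud (kids n ! fst jw) \<in> N \<and> bud (target bud (kids n ! fst jw)) = None \<and>
     costok M w (snd jw) (snd (lab n)) (snd (lab (target bud (kids n ! fst jw)))) (rl n) (fst jw))"
  define ch where "ch = (\<lambda>x :: nat \<times> 'w. SOME jw. Q (fst x) (snd x) jw)"
  define s where "s = rec_nat (n0, w0) (\<lambda>_ x. (target bud (kids (fst x) ! fst (ch x)), snd (ch x)))"
  have s0: "s 0 = (n0, w0)" unfolding s_def by simp
  have sS: "s (Suc i) = (target bud (kids (fst (s i)) ! fst (ch (s i))), snd (ch (s i)))" for i
    unfolding s_def by simp
  have Qex: "Q n w (ch (n, w))" if "n \<in> N" "bud n = None" "goodw M w (lab n)" for n w
  proof -
    from graph_step[OF P M that] have "\<exists>jw. Q n w jw" unfolding Q_def by auto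
    then show ?thesis unfolding ch_def by (simp add: someI_ex)
  qed
  have inv: "fst (s i) \<in> N \<and> bud (fst (s i)) = None \<and> goodw M (snd (s i)) (lab (fst (s i)))" for i
  proof (induction i)
    case 0 then show ?case using s0 n0 g0 by simp
  next
    case (Suc i)
    have "Q (fst (s i)) (snd (s i)) (ch (fst (s i), snd (s i)))" using Qex Suc by blast
    then show ?case unfolding sS Q_def by simp
  qed
  have Qi: "Q (fst (s i)) (snd (s i)) (ch (s i))" for i
    using Qex[of "fst (s i)" "snd (s i)"] inv[of i] by simp
  define p where "p = (\<lambda>i. fst (s i))"
  define jj where "jj = (\<lambda>i. fst (ch (s i)))"
  define wv where "wv = (\<lambda>i. snd (s i))"
  have IP: "inf_path N kids bud p jj"
    unfolding inf_path_def
  proof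
    fix i
    show "p i \<in> N \<and> bud (p i) = None \<and> jj i < length (kids (p i)) \<and>
          p (Suc i) = target bud (kids (p i) ! jj i)"
      using inv[of i] Qi[of i] sS[of i] unfolding p_def jj_def Q_def by simp
  qed
  from C IP obtain k \<tau> where T: "\<forall>i\<ge>k. \<tau> i \<in> snd (lab (p i)) \<and> tr (rl (p i)) (jj i) (\<tau> i) (\<tau> (Suc i))"
    and INF: "\<exists>\<^sub>\<infinity>i. k \<le> i \<and> progress (rl (p i)) (jj i) (\<tau> i) (\<tau> (Suc i))"
    unfolding cgpdl_proof_def by blast
  define f where "f = (\<lambda>i. cst M (wv i) (\<tau> i))"
  have step: "f (Suc i) \<le> f i \<and> (progress (rl (p i)) (jj i) (\<tau> i) (\<tau> (Suc i)) \<longrightarrow> f (Suc i) < f i)"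
    if "i \<ge> k" for i
  proof -
    have t1: "\<tau> i \<in> snd (lab (p i))" and tr1: "tr (rl (p i)) (jj i) (\<tau> i) (\<tau> (Suc i))"
      using T that by auto
    have t2: "\<tau> (Suc i) \<in> snd (lab (p (Suc i)))" using T that by auto
    have ns: "\<not> sat M (wv i) (\<tau> i)" using inv[of i] t1 unfolding goodw_def p_def wv_def by auto
    have co: "costok M (wv i) (wv (Suc i)) (snd (lab (p i))) (snd (lab (p (Suc i)))) (rl (p i)) (jj i)"
      using Qi[of i] sS[of i] unfolding Q_def p_def wv_def jj_def by simp
    show ?thesis using co t1 t2 ns tr1 unfolding costok_def f_def by blast
  qed
  have inf: "\<forall>m. \<exists>i\<ge>m. f (Suc i) < f i"
  proof
    fix m
    from INF obtain i where "i \<ge> max m k" "k \<le> i \<and> progress (rl (p i)) (jj i) (\<tau> i) (\<tau> (Suc i))"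
      unfolding INFM_nat_le by blast
    then show "\<exists>i\<ge>m. f (Suc i) < f i" using step by (metis max.bounded_iff)
  qed
  show False using descent[of k f] step inf by blast
qed

end
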